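(* Let $p,q\in(1,\infty)$. For Borel measures $\mu,\nu$ on $[0,D]$ let $A_D(\mu,\nu)$ be the optimal constant $$A_D(\mu,\nu)=\sup\Big\{\frac{(\int_0^D|f|^q d\mu)^{1/q}}{(\int_0^D|f'|^p d\nu)^{1/p}}:\ f\text{ absolutely continuous},\ f(0)=0,\ 0<\int_0^D|f'|^pd\nu<\infty\Big\}$$ and $B_D(\mu,\nu)=\sup_{x\in(0,D)}\hat\nu(0,x)^{1/p^*}\mu(x,D)^{1/q}$. Let $D<D'\le\infty$ and let $(\mu',\nu')$ be an extension of $(\mu,\nu)$ to $[0,D')$: $\mu'|_{[0,D]}=\mu$, $\nu'|_{[0,D]}=\nu$, and $\mu'|_{(D,D')}=0$. (1) If $A_{D'}(\mu',\nu')\le k\,B_{D'}(\mu',\nu')$ for a constant $k$, then $A_D(\mu,\nu)\le k\,B_D(\mu,\nu)$. (2) In particular, if the inequality $A_{D'}(\mu',\nu')\le k\,B_{D'}(\mu',\nu')$ holds for arbitrary (resp. absolutely continuous) pairs $(\mu',\nu')$, then $A_D(\mu,\nu)\le k\,B_D(\mu,\nu)$ holds for arbitrary (resp. absolutely continuous) pairs $(\mu,\nu)$.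
   Context: $p^*=p/(p-1)$. For a measure $\nu$, $v$ denotes the density of its absolutely continuous part with respect to Lebesgue measure, $\hat v=v^{-1/(p-1)}$, and $\hat\nu(\alpha,\beta)=\int_\alpha^\beta\hat v(x)\,dx$; $\mu(\alpha,\beta)$ is the $\mu$-measure of $(\alpha,\beta)$. On $[0,D')$ the quantities $A_{D'}$, $B_{D'}$ are defined analogously with $D$ replaced by $D'$. *)

theory Defs
  imports "HOL-Analysis.Analysis"
begin

definition enn_powr :: "ennreal \<Rightarrow> real \<Rightarrow> ennreal" where
  "enn_powr x a = (if x = top then top else ennreal (enn2real x powr a))"

text \<open>A Borel measure on the real line that lives on the set Om
  (i.e. a Borel measure on Om, extended by zero).\<close>
definition borel_measure_on :: "real set \<Rightarrow> real measure \<Rightarrow> bool" where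
  "borel_measure_on Om m \<longleftrightarrow> sets m = sets borel \<and> emeasure m (UNIV - Om) = 0"

text \<open>v is the density (w.r.t. Lebesgue measure) of the absolutely continuous part of nu
  in the Lebesgue decomposition nu = v dx + nu_s, nu_s concentrated on a Lebesgue null set S.\<close>
definition ac_part_density :: "real measure \<Rightarrow> (real \<Rightarrow> ennreal) \<Rightarrow> bool" where
  "ac_part_density nu v \<longleftrightarrow> v \<in> borel_measurable borel \<and>
     (\<exists>S\<in>sets borel. emeasure lborel S = 0 \<and>
        (\<forall>A\<in>sets borel. emeasure nu A = (\<integral>\<^sup>+x\<in>A. v x \<partial>lborel) + emeasure nu (A \<inter> S)))"

definition hat_dens :: "real \<Rightarrow> (real \<Rightarrow> ennreal) \<Rightarrow> real \<Rightarrow> ennreal" where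
  "hat_dens p v x = (if v x = 0 then top else if v x = top then 0
                     else ennreal (enn2real (v x) powr (- 1 / (p - 1))))"

definition hat_meas :: "real \<Rightarrow> (real \<Rightarrow> ennreal) \<Rightarrow> real \<Rightarrow> real \<Rightarrow> ennreal" where
  "hat_meas p v a b = (\<integral>\<^sup>+x\<in>{a<..<b}. hat_dens p v x \<partial>lborel)"

text \<open>Absolutely continuous f on the domain Om (an interval starting at 0) with f(0) = 0:
  f(x) = integral of g over [0,x], with g integrable on every [0,x], x in Om; g plays the role of f'.\<close>
definition prim :: "(real \<Rightarrow> real) \<Rightarrow> real \<Rightarrow> real" where
  "prim g x = integral {0..x} g"

definition admissible_deriv :: "real \<Rightarrow> real set \<Rightarrow> real measure \<Rightarrow> (real \<Rightarrow> real) \<Rightarrow> bool" where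
  "admissible_deriv p Om nu g \<longleftrightarrow> g \<in> borel_measurable borel \<and>
     (\<forall>x\<in>Om. g absolutely_integrable_on {0..x}) \<and>
     0 < (\<integral>\<^sup>+x. ennreal (\<bar>g x\<bar> powr p) \<partial>nu) \<and> (\<integral>\<^sup>+x. ennreal (\<bar>g x\<bar> powr p) \<partial>nu) < top"

definition hardyA :: "real \<Rightarrow> real \<Rightarrow> real set \<Rightarrow> real measure \<Rightarrow> real measure \<Rightarrow> ennreal" where
  "hardyA p q Om mu nu =
     (SUP g\<in>{g. admissible_deriv p Om nu g}.
        enn_powr (\<integral>\<^sup>+x. ennreal (\<bar>prim g x\<bar> powr q) \<partial>mu) (1 / q)
        / enn_powr (\<integral>\<^sup>+x. ennreal (\<bar>g x\<bar> powr p) \<partial>nu) (1 / p))"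

text \<open>Muckenhoupt-type quantity B for the domain with right endpoint E:
  sup over 0 < x < E of hat nu(0,x)^(1/p*) mu(tail beyond x)^(1/q), with 1/p* = (p-1)/p.\<close>
definition hardyB :: "real \<Rightarrow> real \<Rightarrow> ereal \<Rightarrow> real measure \<Rightarrow> (real \<Rightarrow> ennreal) \<Rightarrow> ennreal" where
  "hardyB p q E mu v =
     (SUP x\<in>{x. 0 < x \<and> ereal x < E}.
        enn_powr (hat_meas p v 0 x) ((p - 1) / p) * enn_powr (emeasure mu {x<..}) (1 / q))"

definition half_dom :: "ereal \<Rightarrow> real set" where
  "half_dom D' = {x. 0 \<le> x \<and> ereal x < D'}"

definition is_extension :: "real \<Rightarrow> ereal \<Rightarrow> real measure \<Rightarrow> real measure \<Rightarrow> real measure \<Rightarrow> real measure \<Rightarrow> bool" where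
  "is_extension D D' mu nu mu' nu' \<longleftrightarrow>
     (\<forall>A\<in>sets borel. A \<subseteq> {0..D} \<longrightarrow> emeasure mu' A = emeasure mu A \<and> emeasure nu' A = emeasure nu A) \<and>
     emeasure mu' {x. D < x \<and> ereal x < D'} = 0"

end

theory Submission
  imports Defs "HOL-Analysis.Radon_Nikodym"
begin

lemma ae_dens_eq:
  fixes D :: real
  assumes "ac_part_density nu v" "ac_part_density nu' v'"
   and eq: "\<And>A. A \<in> sets borel \<Longrightarrow> A \<subseteq> {0..D} \<Longrightarrow> emeasure nu' A = emeasure nu A"
  shows "AE x in lborel. x \<in> {0..D} \<longrightarrow> v x = v' x"
proof -
  obtain S where S: "S \<in> sets borel" "emeasure lborel S = 0" and dS: "\<And>A. A \<in> sets borel \<Longrightarrow> emeasure nu A = (\<integral>\<^sup>+x\<in>A. v x \<partial>lborel) + emeasure nu (A \<inter> S)" and vm: "v \<in> borel_measurable borel"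
    using assms(1) unfolding ac_part_density_def by blast
  obtain S' where S': "S' \<in> sets borel" "emeasure lborel S' = 0" and dS': "\<And>A. A \<in> sets borel \<Longrightarrow> emeasure nu' A = (\<integral>\<^sup>+x\<in>A. v' x \<partial>lborel) + emeasure nu' (A \<inter> S')" and vm': "v' \<in> borel_measurable borel"
    using assms(2) unfolding ac_part_density_def by blast
  define T where "T = {0..D} - (S \<union> S')"
  have Tb: "T \<in> sets borel" using S S' by (auto simp: T_def)
  have key: "(\<integral>\<^sup>+x\<in>A. v x \<partial>lborel) = (\<integral>\<^sup>+x\<in>A. v' x \<partial>lborel)" if "A \<in> sets borel" "A \<subseteq> T" for A
  proof -
    have "A \<inter> S = {}" "A \<inter> S' = {}" using that by (auto simp: T_def)
    then have "emeasure nu A = (\<integral>\<^sup>+x\<in>A. v x \<partial>lborel)" "emeasure nu' A = (\<integral>\<^sup>+x\<in>A. v' x \<partial>lborel)"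
      using dS[OF that(1)] dS'[OF that(1)] by auto
    moreover have "emeasure nu' A = emeasure nu A" using eq that by (auto simp: T_def)
    ultimately show ?thesis by simp
  qed
  have vmT: "(\<lambda>x. v x * indicator T x) \<in> borel_measurable lborel" "(\<lambda>x. v' x * indicator T x) \<in> borel_measurable lborel"
    using vm vm' Tb by auto
  have "density lborel (\<lambda>x. v x * indicator T x) = density lborel (\<lambda>x. v' x * indicator T x)"
  proof (rule measure_eqI)
    show "sets (density lborel (\<lambda>x. v x * indicator T x)) = sets (density lborel (\<lambda>x. v' x * indicator T x))" by simp
    fix A assume "A \<in> sets (density lborel (\<lambda>x. v x * indicator T x))"
    then have A: "A \<in> sets borel" by simp
    have "emeasure (density lborel (\<lambda>x. v x * indicator T x)) A = (\<integral>\<^sup>+x\<in>A \<inter> T. v x \<partial>lborel)"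
      using A vmT by (subst emeasure_density) (auto intro!: nn_integral_cong split: split_indicator)
    also have "\<dots> = (\<integral>\<^sup>+x\<in>A \<inter> T. v' x \<partial>lborel)" using A Tb by (intro key) auto
    also have "\<dots> = emeasure (density lborel (\<lambda>x. v' x * indicator T x)) A"
      using A vmT by (subst emeasure_density) (auto intro!: nn_integral_cong split: split_indicator)
    finally show "emeasure (density lborel (\<lambda>x. v x * indicator T x)) A = emeasure (density lborel (\<lambda>x. v' x * indicator T x)) A" .
  qed
  then have "AE x in lborel. v x * indicator T x = v' x * indicator T x"
    using vmT by (intro sigma_finite_measure.density_unique[OF sigma_finite_lborel]) auto
  moreover have "S \<in> null_sets lborel" "S' \<in> null_sets lborel" using S S' by (auto intro!: null_setsI)
  then have "S \<union> S' \<in> null_sets lborel" by (rule null_sets.Un)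
  then have "AE x in lborel. x \<notin> S \<union> S'" by (rule AE_not_in)
  ultimately show ?thesis by eventually_elim (auto simp: T_def)
qed

lemma part1:
  fixes p q D :: real and D' :: ereal
  assumes D0: "0 < D" and DD: "ereal D < D'"
    and bmu: "borel_measure_on {0..D} mu" and bnu: "borel_measure_on {0..D} nu" and acv: "ac_part_density nu v"
    and bmu': "borel_measure_on (half_dom D') mu'" and bnu': "borel_measure_on (half_dom D') nu'"
    and acv': "ac_part_density nu' v'"
    and ext: "is_extension D D' mu nu mu' nu'"
  shows "hardyA p q {0..D} mu nu \<le> hardyA p q (half_dom D') mu' nu'"
    and "hardyB p q D' mu' v' = hardyB p q (ereal D) mu v"
proof -
  have smu: "sets mu = sets borel" and snu: "sets nu = sets borel" and smu': "sets mu' = sets borel"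
    and snu': "sets nu' = sets borel"
    using bmu bnu bmu' bnu' by (auto simp: borel_measure_on_def)
  have spmu: "space mu = UNIV" "space nu = UNIV" "space mu' = UNIV" "space nu' = UNIV"
    using sets_eq_imp_space_eq[OF smu] sets_eq_imp_space_eq[OF snu]
      sets_eq_imp_space_eq[OF smu'] sets_eq_imp_space_eq[OF snu'] by auto
  have hb: "half_dom D' \<in> sets borel" and Eb: "{x. D < x \<and> ereal x < D'} \<in> sets borel"
  proof -
    have "(half_dom D' \<in> sets borel) \<and> ({x. D < x \<and> ereal x < D'} \<in> sets borel)"
    proof (cases D')
      case (real r)
      then have "half_dom D' = {0..<r}" "{x. D < x \<and> ereal x < D'} = {D<..<r}"
        by (auto simp: half_dom_def)
      then show ?thesis by simp
    next
      case PInf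
      then have "half_dom D' = {0..}" "{x. D < x \<and> ereal x < D'} = {D<..}"
        by (auto simp: half_dom_def)
      then show ?thesis by simp
    next
      case MInf
      then show ?thesis using DD by simp
    qed
    then show "half_dom D' \<in> sets borel" "{x. D < x \<and> ereal x < D'} \<in> sets borel" by auto
  qed
  have n1: "UNIV - half_dom D' \<in> null_sets mu'"
  proof (rule null_setsI)
    show "emeasure mu' (UNIV - half_dom D') = 0" using bmu' unfolding borel_measure_on_def by blast
    show "UNIV - half_dom D' \<in> sets mu'" using hb smu' by simp
  qed
  have n2: "{x. D < x \<and> ereal x < D'} \<in> null_sets mu'"
  proof (rule null_setsI)
    show "emeasure mu' {x. D < x \<and> ereal x < D'} = 0" using ext unfolding is_extension_def by blast
    show "{x. D < x \<and> ereal x < D'} \<in> sets mu'" using Eb smu' by simp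
  qed
  have n3: "UNIV - {0..D} \<in> null_sets mu'"
  proof -
    have lt: "ereal x < D'" if "x \<le> D" for x
    proof -
      have "ereal x \<le> ereal D" using that by simp
      then show ?thesis using DD by (rule le_less_trans)
    qed
    have "UNIV - {0..D} = (UNIV - half_dom D') \<union> {x. D < x \<and> ereal x < D'} \<union> {x. x < 0}"
      using lt by (auto simp: half_dom_def)
    moreover have "{x::real. x < 0} \<in> null_sets mu'"
      using n1 by (rule null_sets_subset) (auto simp: smu' half_dom_def)
    moreover have "(UNIV - half_dom D') \<union> {x. D < x \<and> ereal x < D'} \<union> {x::real. x < 0} \<in> null_sets mu'"
      using n1 n2 calculation(2) by (intro null_sets.Un)
    ultimately show ?thesis by simp
  qed
  have extA: "\<And>A. A \<in> sets borel \<Longrightarrow> A \<subseteq> {0..D} \<Longrightarrow> emeasure mu' A = emeasure mu A \<and> emeasure nu' A = emeasure nu A"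
    using ext by (auto simp: is_extension_def)
  have nmu: "UNIV - {0..D} \<in> null_sets mu"
  proof (rule null_setsI)
    show "emeasure mu (UNIV - {0..D}) = 0" using bmu unfolding borel_measure_on_def by blast
    show "UNIV - {0..D} \<in> sets mu" using smu by simp
  qed
  have nnu: "UNIV - {0..D} \<in> null_sets nu"
  proof (rule null_setsI)
    show "emeasure nu (UNIV - {0..D}) = 0" using bnu unfolding borel_measure_on_def by blast
    show "UNIV - {0..D} \<in> sets nu" using snu by simp
  qed
  have nnu': "UNIV - half_dom D' \<in> null_sets nu'"
  proof (rule null_setsI)
    show "emeasure nu' (UNIV - half_dom D') = 0" using bnu' unfolding borel_measure_on_def by blast
    show "UNIV - half_dom D' \<in> sets nu'" using hb snu' by simp
  qed
  have mueq: "mu' = mu"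
  proof (rule measure_eqI)
    show "sets mu' = sets mu" using smu smu' by simp
    fix A assume "A \<in> sets mu'"
    then have A: "A \<in> sets borel" using smu' by simp
    have "emeasure mu' A = emeasure mu' (A - (UNIV - {0..D}))"
      using n3 A smu' by (simp add: emeasure_Diff_null_set)
    also have "\<dots> = emeasure mu (A - (UNIV - {0..D}))" using extA[of "A - (UNIV - {0..D})"] A by auto
    also have "\<dots> = emeasure mu A" using nmu A smu by (simp add: emeasure_Diff_null_set)
    finally show "emeasure mu' A = emeasure mu A" .
  qed
  have nueq: "restrict_space nu' {0..D} = restrict_space nu {0..D}"
  proof (rule measure_eqI)
    show "sets (restrict_space nu' {0..D}) = sets (restrict_space nu {0..D})"
      using snu snu' by (simp add: sets_restrict_space)
    fix A assume "A \<in> sets (restrict_space nu' {0..D})"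
    then obtain B where B: "B \<in> sets borel" "A = {0..D} \<inter> B" using snu' by (auto simp: sets_restrict_space)
    then have A: "A \<in> sets borel" "A \<subseteq> {0..D}" by auto
    show "emeasure (restrict_space nu' {0..D}) A = emeasure (restrict_space nu {0..D}) A"
      using A extA[of A] snu snu' spmu by (simp add: emeasure_restrict_space)
  qed
  show "hardyA p q {0..D} mu nu \<le> hardyA p q (half_dom D') mu' nu'"
    unfolding hardyA_def
  proof (rule SUP_mono)
    fix g assume "g \<in> {g. admissible_deriv p {0..D} nu g}"
    then have adm: "admissible_deriv p {0..D} nu g" by simp
    define g' where "g' = (\<lambda>y. if y \<in> {..D} then g y else 0)"
    have gm: "g \<in> borel_measurable borel" using adm by (simp add: admissible_deriv_def)
    then have gm': "g' \<in> borel_measurable borel" unfolding g'_def by (intro measurable_If_set borel_measurable_const) auto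
    have prim_eq: "prim g' x = prim g x" if "x \<le> D" for x
      unfolding prim_def using that by (intro integral_cong) (auto simp: g'_def)
    have Ip: "(\<integral>\<^sup>+x. ennreal (\<bar>g' x\<bar> powr p) \<partial>nu') = (\<integral>\<^sup>+x. ennreal (\<bar>g x\<bar> powr p) \<partial>nu)"
    proof -
      have "(\<integral>\<^sup>+x. ennreal (\<bar>g' x\<bar> powr p) \<partial>nu') = (\<integral>\<^sup>+x. ennreal (\<bar>g' x\<bar> powr p) * indicator {0..D} x \<partial>nu')"
      proof (rule nn_integral_cong_AE)
        have "AE x in nu'. x \<notin> UNIV - half_dom D'" using nnu' by (rule AE_not_in)
        then show "AE x in nu'. ennreal (\<bar>g' x\<bar> powr p) = ennreal (\<bar>g' x\<bar> powr p) * indicator {0..D} x"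
          by eventually_elim (auto simp: g'_def half_dom_def split: split_indicator)
      qed
      also have "\<dots> = (\<integral>\<^sup>+x. ennreal (\<bar>g' x\<bar> powr p) \<partial>restrict_space nu' {0..D})"
        using snu' spmu by (subst nn_integral_restrict_space) auto
      also have "\<dots> = (\<integral>\<^sup>+x. ennreal (\<bar>g' x\<bar> powr p) \<partial>restrict_space nu {0..D})"
        using nueq by simp
      also have "\<dots> = (\<integral>\<^sup>+x. ennreal (\<bar>g' x\<bar> powr p) * indicator {0..D} x \<partial>nu)"
        using snu spmu by (subst nn_integral_restrict_space) auto
      also have "\<dots> = (\<integral>\<^sup>+x. ennreal (\<bar>g x\<bar> powr p) \<partial>nu)"
      proof (rule nn_integral_cong_AE)
        have "AE x in nu. x \<notin> UNIV - {0..D}" using nnu by (rule AE_not_in)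
        then show "AE x in nu. ennreal (\<bar>g' x\<bar> powr p) * indicator {0..D} x = ennreal (\<bar>g x\<bar> powr p)"
          by eventually_elim (auto simp: g'_def)
      qed
      finally show ?thesis .
    qed
    have Iq: "(\<integral>\<^sup>+x. ennreal (\<bar>prim g' x\<bar> powr q) \<partial>mu') = (\<integral>\<^sup>+x. ennreal (\<bar>prim g x\<bar> powr q) \<partial>mu)"
      unfolding mueq
    proof (rule nn_integral_cong_AE)
      have "AE x in mu. x \<notin> UNIV - {0..D}" using nmu by (rule AE_not_in)
      then show "AE x in mu. ennreal (\<bar>prim g' x\<bar> powr q) = ennreal (\<bar>prim g x\<bar> powr q)"
        by eventually_elim (auto simp: prim_eq)
    qed
    have "admissible_deriv p (half_dom D') nu' g'"
      unfolding admissible_deriv_def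
    proof (intro conjI ballI)
      show "g' \<in> borel_measurable borel" by (rule gm')
      fix x assume x: "x \<in> half_dom D'"
      show "g' absolutely_integrable_on {0..x}"
      proof (cases "x \<le> D")
        case True
        then have "g absolutely_integrable_on {0..x}" using adm x by (auto simp: admissible_deriv_def half_dom_def)
        moreover have "(\<lambda>y. if y \<in> {0..x} then g' y else 0) = (\<lambda>y. if y \<in> {0..x} then g y else 0)"
          using True by (auto simp: g'_def)
        ultimately show ?thesis by (metis absolutely_integrable_restrict_UNIV)
      next
        case False
        then have "g absolutely_integrable_on {0..D}" using adm D0 by (auto simp: admissible_deriv_def)
        moreover have "(\<lambda>y. if y \<in> {0..x} then g' y else 0) = (\<lambda>y. if y \<in> {0..D} then g y else 0)"
          using False by (auto simp: g'_def)
        ultimately show ?thesis by (metis absolutely_integrable_restrict_UNIV)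
      qed
    qed (use adm Ip in \<open>auto simp: admissible_deriv_def\<close>)
    then show "\<exists>m\<in>{g. admissible_deriv p (half_dom D') nu' g}.
         enn_powr (\<integral>\<^sup>+x. ennreal (\<bar>prim g x\<bar> powr q) \<partial>mu) (1 / q) /
         enn_powr (\<integral>\<^sup>+x. ennreal (\<bar>g x\<bar> powr p) \<partial>nu) (1 / p)
         \<le> enn_powr (\<integral>\<^sup>+x. ennreal (\<bar>prim m x\<bar> powr q) \<partial>mu') (1 / q) /
            enn_powr (\<integral>\<^sup>+x. ennreal (\<bar>m x\<bar> powr p) \<partial>nu') (1 / p)"
      using Ip Iq by (intro bexI[of _ g']) auto
  qed
  have ae: "AE x in lborel. x \<in> {0..D} \<longrightarrow> v x = v' x"
    by (rule ae_dens_eq[OF acv acv']) (use extA in blast)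
  have hm: "hat_meas p v' 0 x = hat_meas p v 0 x" if "x \<le> D" for x
    unfolding hat_meas_def
  proof (rule nn_integral_cong_AE)
    from ae show "AE y in lborel. hat_dens p v' y * indicator {0<..<x} y = hat_dens p v y * indicator {0<..<x} y"
      by eventually_elim (use that in \<open>auto simp: hat_dens_def split: split_indicator\<close>)
  qed
  have z: "emeasure mu {x<..} = 0" if "D \<le> x" for x
  proof -
    have "{x<..} \<in> null_sets mu" using nmu by (rule null_sets_subset) (use that smu in auto)
    then show ?thesis by auto
  qed
  show "hardyB p q D' mu' v' = hardyB p q (ereal D) mu v"
    unfolding hardyB_def mueq
  proof (rule antisym)
    show "(SUP x\<in>{x. 0 < x \<and> ereal x < D'}. enn_powr (hat_meas p v' 0 x) ((p - 1) / p) * enn_powr (emeasure mu {x<..}) (1 / q))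
      \<le> (SUP x\<in>{x. 0 < x \<and> ereal x < ereal D}. enn_powr (hat_meas p v 0 x) ((p - 1) / p) * enn_powr (emeasure mu {x<..}) (1 / q))"
    proof (rule SUP_least)
      fix x assume x: "x \<in> {x. 0 < x \<and> ereal x < D'}"
      show "enn_powr (hat_meas p v' 0 x) ((p - 1) / p) * enn_powr (emeasure mu {x<..}) (1 / q)
        \<le> (SUP x\<in>{x. 0 < x \<and> ereal x < ereal D}. enn_powr (hat_meas p v 0 x) ((p - 1) / p) * enn_powr (emeasure mu {x<..}) (1 / q))"
      proof (cases "x < D")
        case True
        then show ?thesis using x hm[of x] by (intro SUP_upper2[of x]) auto
      next
        case False
        then show ?thesis using z[of x] by (simp add: enn_powr_def)
      qed
    qed
    show "(SUP x\<in>{x. 0 < x \<and> ereal x < ereal D}. enn_powr (hat_meas p v 0 x) ((p - 1) / p) * enn_powr (emeasure mu {x<..}) (1 / q))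
      \<le> (SUP x\<in>{x. 0 < x \<and> ereal x < D'}. enn_powr (hat_meas p v' 0 x) ((p - 1) / p) * enn_powr (emeasure mu {x<..}) (1 / q))"
    proof (rule SUP_mono)
      fix x assume x: "x \<in> {x. 0 < x \<and> ereal x < ereal D}"
      then have "ereal x < ereal D" by simp
      then have "ereal x < D'" using DD by (rule less_trans)
      then show "\<exists>m\<in>{x. 0 < x \<and> ereal x < D'}. enn_powr (hat_meas p v 0 x) ((p - 1) / p) * enn_powr (emeasure mu {x<..}) (1 / q)
          \<le> enn_powr (hat_meas p v' 0 m) ((p - 1) / p) * enn_powr (emeasure mu {m<..}) (1 / q)"
        using x hm[of x] by (intro bexI[of _ x]) auto
    qed
  qed
qed

theorem lemma4p2:
  fixes p q k D :: real and D' :: ereal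
  assumes "1 < p" and "1 < q" and "0 < D" and "ereal D < D'"
  shows
    "(\<forall>mu nu v mu' nu' v'.
        borel_measure_on {0..D} mu \<and> borel_measure_on {0..D} nu \<and> ac_part_density nu v \<and>
        borel_measure_on (half_dom D') mu' \<and> borel_measure_on (half_dom D') nu' \<and> ac_part_density nu' v' \<and>
        is_extension D D' mu nu mu' nu' \<and>
        enn2ereal (hardyA p q (half_dom D') mu' nu') \<le> ereal k * enn2ereal (hardyB p q D' mu' v')
        \<longrightarrow> enn2ereal (hardyA p q {0..D} mu nu) \<le> ereal k * enn2ereal (hardyB p q (ereal D) mu v))
     \<and>
     ((\<forall>mu' nu' v'.
        borel_measure_on (half_dom D') mu' \<and> borel_measure_on (half_dom D') nu' \<and> ac_part_density nu' v'
        \<longrightarrow> enn2ereal (hardyA p q (half_dom D') mu' nu') \<le> ereal k * enn2ereal (hardyB p q D' mu' v'))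
      \<longrightarrow> (\<forall>mu nu v.
        borel_measure_on {0..D} mu \<and> borel_measure_on {0..D} nu \<and> ac_part_density nu v
        \<longrightarrow> enn2ereal (hardyA p q {0..D} mu nu) \<le> ereal k * enn2ereal (hardyB p q (ereal D) mu v)))
     \<and>
     ((\<forall>mu' nu' v'.
        borel_measure_on (half_dom D') mu' \<and> borel_measure_on (half_dom D') nu' \<and> ac_part_density nu' v' \<and>
        absolutely_continuous lborel mu' \<and> absolutely_continuous lborel nu'
        \<longrightarrow> enn2ereal (hardyA p q (half_dom D') mu' nu') \<le> ereal k * enn2ereal (hardyB p q D' mu' v'))
      \<longrightarrow> (\<forall>mu nu v.
        borel_measure_on {0..D} mu \<and> borel_measure_on {0..D} nu \<and> ac_part_density nu v \<and>
        absolutely_continuous lborel mu \<and> absolutely_continuous lborel nu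
        \<longrightarrow> enn2ereal (hardyA p q {0..D} mu nu) \<le> ereal k * enn2ereal (hardyB p q (ereal D) mu v)))"
proof (intro conjI allI impI)
  have P1: "enn2ereal (hardyA p q {0..D} mu nu) \<le> ereal k * enn2ereal (hardyB p q (ereal D) mu v)"
    if h: "borel_measure_on {0..D} mu \<and> borel_measure_on {0..D} nu \<and> ac_part_density nu v \<and>
        borel_measure_on (half_dom D') mu' \<and> borel_measure_on (half_dom D') nu' \<and> ac_part_density nu' v' \<and>
        is_extension D D' mu nu mu' nu' \<and>
        enn2ereal (hardyA p q (half_dom D') mu' nu') \<le> ereal k * enn2ereal (hardyB p q D' mu' v')"
    for mu nu v mu' nu' v'
  proof -
    have a: "hardyA p q {0..D} mu nu \<le> hardyA p q (half_dom D') mu' nu'"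
      and b: "hardyB p q D' mu' v' = hardyB p q (ereal D) mu v"
      using part1[of D D' mu nu v mu' nu' v' p q] h assms by auto
    have "enn2ereal (hardyA p q {0..D} mu nu) \<le> enn2ereal (hardyA p q (half_dom D') mu' nu')"
      using a by (simp add: less_eq_ennreal.rep_eq)
    also have "\<dots> \<le> ereal k * enn2ereal (hardyB p q D' mu' v')" using h by blast
    finally show ?thesis using b by simp
  qed
  have ext_self: "borel_measure_on (half_dom D') mu \<and> borel_measure_on (half_dom D') nu \<and>
      is_extension D D' mu nu mu nu"
    if "borel_measure_on {0..D} mu" "borel_measure_on {0..D} nu" for mu nu
  proof -
    have lt: "ereal x < D'" if "x \<le> D" for x
    proof -
      have "ereal x \<le> ereal D" using that by simp
      then show ?thesis using assms(4) by (rule le_less_trans)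
    qed
    have sb: "{x. 0 \<le> x \<and> ereal x < D'} \<in> sets borel"
    proof (cases D')
      case (real r)
      then have "{x. 0 \<le> x \<and> ereal x < D'} = {0..<r}" by auto
      then show ?thesis by simp
    next
      case PInf
      then have "{x. 0 \<le> x \<and> ereal x < D'} = {0..}" by auto
      then show ?thesis by simp
    next
      case MInf
      then show ?thesis using assms(4) by simp
    qed
    have sb2: "{x. D < x \<and> ereal x < D'} \<in> sets borel"
    proof -
      have "{x. D < x \<and> ereal x < D'} = {x. 0 \<le> x \<and> ereal x < D'} \<inter> {D<..}" using assms(3) by auto
      then show ?thesis using sb by simp
    qed
    have m: "emeasure m (UNIV - half_dom D') = 0" "emeasure m {x. D < x \<and> ereal x < D'} = 0"
      if bm: "borel_measure_on {0..D} m" for m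
    proof -
      have sm: "sets m = sets borel" and z: "emeasure m (UNIV - {0..D}) = 0" using bm by (auto simp: borel_measure_on_def)
      have "UNIV - half_dom D' \<subseteq> UNIV - {0..D}" using lt by (auto simp: half_dom_def)
      moreover have "UNIV - {0..D} \<in> sets m" using sm by simp
      ultimately have "emeasure m (UNIV - half_dom D') \<le> emeasure m (UNIV - {0..D})"
        by (rule emeasure_mono)
      then show "emeasure m (UNIV - half_dom D') = 0" using z by simp
      have "{x. D < x \<and> ereal x < D'} \<subseteq> UNIV - {0..D}" by auto
      then have "emeasure m {x. D < x \<and> ereal x < D'} \<le> emeasure m (UNIV - {0..D})"
        using \<open>UNIV - {0..D} \<in> sets m\<close> by (rule emeasure_mono)
      then show "emeasure m {x. D < x \<and> ereal x < D'} = 0" using z by simp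
    qed
    have s1: "sets mu = sets borel" "sets nu = sets borel" using that by (auto simp: borel_measure_on_def)
    show ?thesis unfolding borel_measure_on_def is_extension_def
      using s1 m[OF that(1)] m[OF that(2)] by simp
  qed
  show "enn2ereal (hardyA p q {0..D} mu nu) \<le> ereal k * enn2ereal (hardyB p q (ereal D) mu v)"
    if "\<forall>mu' nu' v'. borel_measure_on (half_dom D') mu' \<and> borel_measure_on (half_dom D') nu' \<and> ac_part_density nu' v'
        \<longrightarrow> enn2ereal (hardyA p q (half_dom D') mu' nu') \<le> ereal k * enn2ereal (hardyB p q D' mu' v')"
      and "borel_measure_on {0..D} mu \<and> borel_measure_on {0..D} nu \<and> ac_part_density nu v"
    for mu nu v
  proof -
    have bm: "borel_measure_on {0..D} mu" "borel_measure_on {0..D} nu" "ac_part_density nu v"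
      using that(2) by auto
    note e = ext_self[OF bm(1) bm(2)]
    have h: "enn2ereal (hardyA p q (half_dom D') mu nu) \<le> ereal k * enn2ereal (hardyB p q D' mu v)"
      using that bm e by simp
    show ?thesis by (rule P1[of mu nu v mu nu v]) (use bm e h in simp)
  qed
  show "enn2ereal (hardyA p q {0..D} mu nu) \<le> ereal k * enn2ereal (hardyB p q (ereal D) mu v)"
    if "\<forall>mu' nu' v'. borel_measure_on (half_dom D') mu' \<and> borel_measure_on (half_dom D') nu' \<and> ac_part_density nu' v' \<and>
        absolutely_continuous lborel mu' \<and> absolutely_continuous lborel nu'
        \<longrightarrow> enn2ereal (hardyA p q (half_dom D') mu' nu') \<le> ereal k * enn2ereal (hardyB p q D' mu' v')"
      and "borel_measure_on {0..D} mu \<and> borel_measure_on {0..D} nu \<and> ac_part_density nu v \<and>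
        absolutely_continuous lborel mu \<and> absolutely_continuous lborel nu"
    for mu nu v
  proof -
    have bm: "borel_measure_on {0..D} mu" "borel_measure_on {0..D} nu" "ac_part_density nu v"
      using that(2) by auto
    note e = ext_self[OF bm(1) bm(2)]
    have h: "enn2ereal (hardyA p q (half_dom D') mu nu) \<le> ereal k * enn2ereal (hardyB p q D' mu v)"
      using that bm e by simp
    show ?thesis by (rule P1[of mu nu v mu nu v]) (use bm e h in simp)
  qed
  show "enn2ereal (hardyA p q {0..D} mu nu) \<le> ereal k * enn2ereal (hardyB p q (ereal D) mu v)"
    if h: "borel_measure_on {0..D} mu \<and> borel_measure_on {0..D} nu \<and> ac_part_density nu v \<and>
        borel_measure_on (half_dom D') mu' \<and> borel_measure_on (half_dom D') nu' \<and> ac_part_density nu' v' \<and>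
        is_extension D D' mu nu mu' nu' \<and>
        enn2ereal (hardyA p q (half_dom D') mu' nu') \<le> ereal k * enn2ereal (hardyB p q D' mu' v')"
    for mu nu v mu' nu' v'
    using that by (rule P1)
qed

end
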